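(* Let $L>0$, $\mathbb{T}=[0,L]$ with periodic boundary conditions, $N\ge1$, $D_i>0$, $h_{ij}\in\mathbb{R}$, and $K:\mathbb{T}\to\mathbb{R}$, $K\ge0$, a zero-mean probability density that is twice differentiable with $K'\in L^\infty(\mathbb{T})$. Let $u_0\in C^2(\mathbb{T})^N$ with $u_0(x)>0$ for all $x\in\mathbb{T}$, and let $u=(u_1,\dots,u_N)\in C^1((0,T_* ),L^2(\mathbb{T}))^N\cap C^0((0,T_* ),C^2(\mathbb{T}))^N$ be the solution of \[ \partial_tu_i=D_i\partial_x^2u_i-\partial_x\Big[u_i\,\partial_x\sum_{j=1}^Nh_{ij}(K\ast u_j)\Big],\quad i=1,\dots,N,\qquad u(\cdot,0)=u_0, \] where $T_*=\infty$ if $\|u(t)\|_{L^1}$ is bounded for all time and otherwise $T_*$ is the earliest time at which $\|u(t)\|_{L^1}=2\|u_0\|_{L^1}$. Then $u(x,t)>0$ (componentwise) for all $x\in\mathbb{T}$ and $t<T_*$.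
   Context: $(K\ast f)(x)=\int_0^LK(x-y)f(y)\,dy$ with periodic extension; for vector-valued $g$, $\|g\|_{L^1}=\sum_i\|g_i\|_{L^1}$. The solution is the unique (mild, and here classical) solution of the system constructed from the initial datum. *)

theory Defs
  imports "HOL-Analysis.Analysis"
begin

definition pconv :: "real \<Rightarrow> (real \<Rightarrow> real) \<Rightarrow> (real \<Rightarrow> real) \<Rightarrow> real \<Rightarrow> real" where
  "pconv L K f x = integral {0..L} (\<lambda>y. K (x - y) * f y)"

text \<open>L-periodicity of a function on the real line (functions on the torus).\<close>
definition periodic :: "real \<Rightarrow> (real \<Rightarrow> real) \<Rightarrow> bool" where
  "periodic L f \<longleftrightarrow> (\<forall>x. f (x + L) = f x)"

definition C2 :: "(real \<Rightarrow> real) \<Rightarrow> bool" where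
  "C2 f \<longleftrightarrow> (\<forall>x. f differentiable at x) \<and> (\<forall>x. deriv f differentiable at x)
           \<and> continuous_on UNIV (deriv (deriv f))"

definition L1norm :: "real \<Rightarrow> nat \<Rightarrow> (nat \<Rightarrow> real \<Rightarrow> real) \<Rightarrow> real" where
  "L1norm L N v = (\<Sum>i<N. integral {0..L} (\<lambda>x. \<bar>v i x\<bar>))"

definition Tstar :: "real \<Rightarrow> nat \<Rightarrow> (nat \<Rightarrow> real \<Rightarrow> real \<Rightarrow> real) \<Rightarrow> ereal \<Rightarrow> ereal" where
  "Tstar L N u Tmax =
     (if (\<exists>C. \<forall>t. 0 \<le> t \<and> ereal t < Tmax \<longrightarrow> L1norm L N (\<lambda>i x. u i x t) \<le> C) then \<infinity>
      else Inf (ereal ` {t. 0 \<le> t \<and> ereal t < Tmax \<and>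
                  L1norm L N (\<lambda>i x. u i x t) = 2 * L1norm L N (\<lambda>i x. u i x 0)}))"

end

theory Submission
  imports Defs
begin

lemma deriv_cont:
  assumes "\<And>x. f differentiable at x"
  shows "continuous_on UNIV (f::real\<Rightarrow>real)"
  using assms differentiable_imp_continuous_within continuous_at_imp_continuous_on by blast

lemma conv_has_deriv:
  fixes K g :: "real \<Rightarrow> real"
  assumes Kd: "\<And>x. K differentiable at x" "\<And>x. deriv K differentiable at x"
    and g: "continuous_on {0..L} g"
  shows "((\<lambda>z. integral {0..L} (\<lambda>y. K (z - y) * g y)) has_real_derivative
           integral {0..L} (\<lambda>y. deriv K (z - y) * g y)) (at z)"
proof -
  have Kc: "continuous_on UNIV K" using deriv_cont Kd(1) .
  have K'c: "continuous_on UNIV (deriv K)" using deriv_cont Kd(2) .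
  have dK: "(K has_real_derivative deriv K x) (at x)" for x
    using Kd(1) DERIV_deriv_iff_real_differentiable by blast
  have "((\<lambda>z. integral (cbox 0 L) (\<lambda>y. K (z - y) * g y)) has_field_derivative
           integral (cbox 0 L) (\<lambda>y. deriv K (z - y) * g y)) (at z within UNIV)"
  proof (rule leibniz_rule_field_derivative)
    fix x t
    show "((\<lambda>x. K (x - t) * g t) has_field_derivative deriv K (x - t) * g t) (at x within UNIV)"
      using DERIV_chain2[OF dK, of "\<lambda>x. x - t" 1 x]
      by (auto intro!: derivative_eq_intros DERIV_chain2[OF dK])
  next
    fix x
    show "(\<lambda>t. K (x - t) * g t) integrable_on cbox 0 L"
      by (rule integrable_continuous) (auto intro!: continuous_intros continuous_on_compose2[OF Kc] g)
  next
    show "continuous_on (UNIV \<times> cbox 0 L) (\<lambda>(x, t). deriv K (x - t) * g t)"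
      apply (auto simp: split_beta intro!: continuous_intros continuous_on_compose2[OF K'c])
      apply (rule continuous_on_compose2[OF g]) by (auto intro!: continuous_intros)
  qed auto
  then show ?thesis by simp
qed

lemma conv_ibp:
  fixes K f f' :: "real \<Rightarrow> real"
  assumes Kd: "\<And>x. K differentiable at x" "\<And>x. deriv K differentiable at x"
    and fd: "\<And>x. (f has_real_derivative f' x) (at x)" and f'c: "continuous_on UNIV f'"
    and per: "K (z - L) * f L = K z * f 0"
  shows "integral {0..L} (\<lambda>y. deriv K (z - y) * f y) = integral {0..L} (\<lambda>y. K (z - y) * f' y)"
proof (cases "0 \<le> L")
  case True
  have Kc: "continuous_on UNIV K" using deriv_cont Kd(1) .
  have K'c: "continuous_on UNIV (deriv K)" using deriv_cont Kd(2) .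
  have fc: "continuous_on UNIV f" using fd
    by (meson DERIV_isCont continuous_at_imp_continuous_on)
  have dK: "(K has_real_derivative deriv K x) (at x)" for x
    using Kd(1) DERIV_deriv_iff_real_differentiable by blast
  have "((\<lambda>y. - (deriv K (z - y) * f y) + K (z - y) * f' y) has_integral
        (K (z - L) * f L - K (z - 0) * f 0)) {0..L}"
  proof (rule fundamental_theorem_of_calculus[OF True])
    fix y assume "y \<in> {0..L}"
    have "((\<lambda>y. K (z - y) * f y) has_real_derivative (- (deriv K (z - y) * f y) + K (z - y) * f' y)) (at y)"
      by (auto intro!: derivative_eq_intros DERIV_chain2[OF dK] fd)
    then show "((\<lambda>y. K (z - y) * f y) has_vector_derivative (- (deriv K (z - y) * f y) + K (z - y) * f' y)) (at y within {0..L})"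
      using has_real_derivative_iff_has_vector_derivative has_vector_derivative_at_within by blast
  qed
  then have "integral {0..L} (\<lambda>y. - (deriv K (z - y) * f y) + K (z - y) * f' y) = 0"
    using per by (simp add: integral_unique)
  moreover have i1: "(\<lambda>y. deriv K (z - y) * f y) integrable_on {0..L}"
    by (rule integrable_continuous_interval) (auto intro!: continuous_intros continuous_on_compose2[OF K'c] continuous_on_subset[OF fc])
  moreover have i2: "(\<lambda>y. K (z - y) * f' y) integrable_on {0..L}"
    by (rule integrable_continuous_interval) (auto intro!: continuous_intros continuous_on_compose2[OF Kc] continuous_on_subset[OF f'c])
  ultimately show ?thesis
    by (simp add: integral_diff)
qed simp

lemma periodic_int:
  assumes "periodic L f" shows "f (y + real_of_int k * L) = f y"
proof -
  have n: "f (y + real n * L) = f y" for y n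
  proof (induction n arbitrary: y)
    case (Suc n)
    have "f (y + real (Suc n) * L) = f ((y + L) + real n * L)" by (simp add: algebra_simps)
    also have "\<dots> = f (y + L)" by (rule Suc)
    also have "\<dots> = f y" using assms by (simp add: periodic_def)
    finally show ?case .
  qed simp
  show ?thesis
  proof (cases "k \<ge> 0")
    case True then obtain n where "k = int n" by (metis nonneg_eq_int)
    then show ?thesis using n by simp
  next
    case False then obtain n where "k = - int n" using nonneg_eq_int[of "- k"] by (metis add.inverse_inverse le_cases neg_0_le_iff_le)
    then show ?thesis using n[of "y - real n * L" n] by simp
  qed
qed

lemma periodic_reduce:
  assumes "L > 0" "periodic L f" shows "\<exists>y\<in>{0..L}. f x = f y"
proof -
  define k where "k = \<lfloor>x / L\<rfloor>"
  define y where "y = x - real_of_int k * L"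
  have a: "real_of_int k \<le> x / L" "x / L < real_of_int k + 1" unfolding k_def
    by (rule of_int_floor_le, rule real_of_int_floor_add_one_gt)
  have "real_of_int k * L \<le> x" using a(1) assms(1) by (simp add: pos_le_divide_eq)
  moreover have "x < (real_of_int k + 1) * L" using a(2) assms(1) by (simp add: pos_divide_less_eq)
  ultimately have "y \<in> {0..L}" unfolding y_def by (auto simp: algebra_simps)
  moreover have "f x = f y" using periodic_int[OF assms(2), of y k] by (simp add: y_def)
  ultimately show ?thesis by blast
qed

lemma min_second_deriv:
  fixes f f' :: "real \<Rightarrow> real"
  assumes fd: "\<And>x. (f has_real_derivative f' x) (at x)"
    and f'd: "(f' has_real_derivative f2) (at x0)"
    and mn: "\<And>y. f x0 \<le> f y"
  shows "f' x0 = 0" "f2 \<ge> 0"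
proof -
  show z: "f' x0 = 0"
    using DERIV_local_min[OF fd[of x0], of 1] mn by auto
  show "f2 \<ge> 0"
  proof (rule ccontr)
    assume "\<not> f2 \<ge> 0"
    then have neg: "f2 < 0" by simp
    have "((\<lambda>y. (f' y - f' x0) / (y - x0)) \<longlongrightarrow> f2) (at x0)"
      using f'd by (simp add: has_field_derivative_iff)
    then have "((\<lambda>y. (f' y - f' x0) / (y - x0)) \<longlongrightarrow> f2) (at_right x0)"
      by (rule filterlim_mono) (auto simp: at_le)
    then have "eventually (\<lambda>y. (f' y - f' x0) / (y - x0) < 0) (at_right x0)"
      using neg by (rule order_tendstoD)
    then obtain d where d: "d > 0" "\<And>y. y > x0 \<Longrightarrow> y < x0 + d \<Longrightarrow> (f' y - f' x0) / (y - x0) < 0"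
    proof -
      obtain b where "x0 < b" "\<forall>y>x0. y < b \<longrightarrow> (f' y - f' x0) / (y - x0) < 0"
        using \<open>eventually _ _\<close> unfolding eventually_at_right_field by blast
      then show ?thesis using that[of "b - x0"] by auto
    qed
    have fneg: "f' y < 0" if "y > x0" "y < x0 + d" for y
      using d(2)[OF that] that z by (simp add: divide_less_0_iff)
    obtain c where c: "c > x0" "c < x0 + d/2" "f (x0 + d/2) - f x0 = (x0 + d/2 - x0) * f' c"
      using MVT2[of x0 "x0 + d/2" f f'] d fd by auto
    then have "f' c < 0" using fneg d by auto
    moreover have "x0 + d/2 - x0 > 0" using d by simp
    ultimately have "(x0 + d/2 - x0) * f' c < 0" by (rule mult_pos_neg[rotated])
    then have "f (x0 + d/2) - f x0 < 0" using c(3) by linarith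
    then show False using mn[of "x0 + d/2"] by simp
  qed
qed

lemma deriv_left_nonpos:
  fixes g :: "real \<Rightarrow> real"
  assumes gd: "(g has_real_derivative g') (at t0)" and a: "a < t0"
    and pos: "\<And>t. a < t \<Longrightarrow> t < t0 \<Longrightarrow> g t > 0" and g0: "g t0 \<le> 0"
  shows "g' \<le> 0" "g t0 = 0"
proof -
  have "((\<lambda>y. (g y - g t0) / (y - t0)) \<longlongrightarrow> g') (at t0)"
    using gd by (simp add: has_field_derivative_iff)
  then have "((\<lambda>y. (g y - g t0) / (y - t0)) \<longlongrightarrow> g') (at_left t0)"
    by (rule filterlim_mono) (auto simp: at_le)
  moreover have "eventually (\<lambda>y. (g y - g t0) / (y - t0) \<le> 0) (at_left t0)"
    using eventually_at_left_real[OF a]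
    proof eventually_elim
      case (elim y)
      then have "g y - g t0 \<ge> 0" "y - t0 < 0" using pos[of y] g0 by auto
      then show ?case by (simp add: divide_nonneg_neg)
    qed
  ultimately show "g' \<le> 0"
    by (rule tendsto_upperbound) (simp add: trivial_limit_at_left_real)
  have "(g \<longlongrightarrow> g t0) (at_left t0)"
    using DERIV_isCont[OF gd] by (simp add: isCont_def filterlim_at_split)
  moreover have "eventually (\<lambda>y. g y \<ge> 0) (at_left t0)"
    using eventually_at_left_real[OF a]
    by eventually_elim (use pos in \<open>auto simp: less_imp_le\<close>)
  ultimately have "g t0 \<ge> 0"
    by (rule tendsto_lowerbound) (simp add: trivial_limit_at_left_real)
  then show "g t0 = 0" using g0 by simp
qed

lemma W_lemma:
  fixes K :: "real \<Rightarrow> real" and F :: "nat \<Rightarrow> real \<Rightarrow> real" and c :: "nat \<Rightarrow> real"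
  assumes Kd: "\<And>x. K differentiable at x" "\<And>x. deriv K differentiable at x"
    and Kper: "periodic L K"
    and Fd: "\<And>j x. j < N \<Longrightarrow> F j differentiable at x"
    and F'd: "\<And>j x. j < N \<Longrightarrow> deriv (F j) differentiable at x"
    and Fper: "\<And>j. j < N \<Longrightarrow> periodic L (F j)"
  shows "deriv (\<lambda>z. \<Sum>j<N. c j * pconv L K (F j) z) =
           (\<lambda>y. \<Sum>j<N. c j * integral {0..L} (\<lambda>s. K (y - s) * deriv (F j) s))"
    and "((\<lambda>y. \<Sum>j<N. c j * integral {0..L} (\<lambda>s. K (y - s) * deriv (F j) s)) has_real_derivative
          (\<Sum>j<N. c j * integral {0..L} (\<lambda>s. deriv K (y - s) * deriv (F j) s))) (at y)"
proof -
  have Fc: "continuous_on UNIV (F j)" if "j < N" for j using deriv_cont Fd that by blast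
  have F'c: "continuous_on UNIV (deriv (F j))" if "j < N" for j using deriv_cont F'd that by blast
  have dF: "(F j has_real_derivative deriv (F j) x) (at x)" if "j < N" for j x
    using Fd[OF that] DERIV_deriv_iff_real_differentiable by blast
  show "((\<lambda>y. \<Sum>j<N. c j * integral {0..L} (\<lambda>s. K (y - s) * deriv (F j) s)) has_real_derivative
          (\<Sum>j<N. c j * integral {0..L} (\<lambda>s. deriv K (y - s) * deriv (F j) s))) (at y)"
    by (rule DERIV_sum, rule DERIV_cmult, rule conv_has_deriv[OF Kd],
        auto intro: continuous_on_subset[OF F'c])
  show "deriv (\<lambda>z. \<Sum>j<N. c j * pconv L K (F j) z) =
           (\<lambda>y. \<Sum>j<N. c j * integral {0..L} (\<lambda>s. K (y - s) * deriv (F j) s))"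
  proof
    fix y
    have "((\<lambda>z. \<Sum>j<N. c j * pconv L K (F j) z) has_real_derivative
          (\<Sum>j<N. c j * integral {0..L} (\<lambda>s. deriv K (y - s) * F j s))) (at y)"
      unfolding pconv_def
      by (rule DERIV_sum, rule DERIV_cmult, rule conv_has_deriv[OF Kd],
        auto intro: continuous_on_subset[OF Fc])
    then have "deriv (\<lambda>z. \<Sum>j<N. c j * pconv L K (F j) z) y =
          (\<Sum>j<N. c j * integral {0..L} (\<lambda>s. deriv K (y - s) * F j s))"
      by (rule DERIV_imp_deriv)
    also have "\<dots> = (\<Sum>j<N. c j * integral {0..L} (\<lambda>s. K (y - s) * deriv (F j) s))"
    proof (rule sum.cong[OF refl])
      fix j assume "j \<in> {..<N}"
      then have j: "j < N" by simp
      have "K (y - L) * F j L = K y * F j 0"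
        using Kper Fper[OF j] unfolding periodic_def
        by (metis add.left_neutral diff_add_cancel)
      then show "c j * integral {0..L} (\<lambda>s. deriv K (y - s) * F j s) =
                 c j * integral {0..L} (\<lambda>s. K (y - s) * deriv (F j) s)"
        using conv_ibp[OF Kd dF[OF j] F'c[OF j]] by simp
    qed
    finally show "deriv (\<lambda>z. \<Sum>j<N. c j * pconv L K (F j) z) y =
          (\<Sum>j<N. c j * integral {0..L} (\<lambda>s. K (y - s) * deriv (F j) s))" .
  qed
qed

lemma int_bound:
  fixes k g :: "real \<Rightarrow> real"
  assumes "L \<ge> 0" "\<And>x. \<bar>k x\<bar> \<le> M" "\<And>s. s \<in> {0..L} \<Longrightarrow> \<bar>g s\<bar> \<le> B"
    and "continuous_on {0..L} (\<lambda>s. k (y - s) * g s)"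
  shows "\<bar>integral {0..L} (\<lambda>s. k (y - s) * g s)\<bar> \<le> M * B * L"
proof -
  have i: "(\<lambda>s. k (y - s) * g s) integrable_on {0..L}"
    using assms(4) integrable_continuous_interval by blast
  have b: "\<bar>k (y - s) * g s\<bar> \<le> M * B" if "s \<in> {0..L}" for s
    unfolding abs_mult by (rule mult_mono) (use assms(2,3) that in \<open>auto intro: order_trans[OF abs_ge_zero]\<close>)
  have "integral {0..L} (\<lambda>s. k (y - s) * g s) \<le> integral {0..L} (\<lambda>s. M * B)"
    by (rule integral_le[OF i]) (use b in \<open>auto simp: abs_le_iff\<close>)
  moreover have "integral {0..L} (\<lambda>s. - (M * B)) \<le> integral {0..L} (\<lambda>s. k (y - s) * g s)"
    by (rule integral_le[OF _ i]) (use b in \<open>force simp: abs_le_iff\<close>)+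
  ultimately show ?thesis using assms(1) by (simp add: abs_le_iff algebra_simps)
qed

theorem lemma3p9:
  fixes L :: real and N :: nat and D :: "nat \<Rightarrow> real" and h :: "nat \<Rightarrow> nat \<Rightarrow> real"
    and K :: "real \<Rightarrow> real" and u0 :: "nat \<Rightarrow> real \<Rightarrow> real"
    and u :: "nat \<Rightarrow> real \<Rightarrow> real \<Rightarrow> real" and Tmax :: ereal
  assumes L_pos: "L > 0" and N_pos: "N \<ge> 1"
    and D_pos: "\<And>i. i < N \<Longrightarrow> D i > 0"
    \<comment> \<open>kernel: periodic, nonnegative probability density with zero mean,
        twice differentiable, with bounded derivative\<close>
    and K_per: "periodic L K"
    and K_nonneg: "\<And>x. K x \<ge> 0"
    and K_int: "K integrable_on {0..L}" and K_mass: "integral {0..L} K = 1"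
    and K_mean: "(\<lambda>x. x * K x) integrable_on {-L/2..L/2}"
                "integral {-L/2..L/2} (\<lambda>x. x * K x) = 0"
    and K_diff: "\<And>x. K differentiable at x" "\<And>x. deriv K differentiable at x"
    and K'_bdd: "\<exists>M. \<forall>x. \<bar>deriv K x\<bar> \<le> M"
    \<comment> \<open>initial datum: C^2, periodic, strictly positive\<close>
    and u0_C2: "\<And>i. i < N \<Longrightarrow> C2 (u0 i)"
    and u0_per: "\<And>i. i < N \<Longrightarrow> periodic L (u0 i)"
    and u0_pos: "\<And>i x. i < N \<Longrightarrow> u0 i x > 0"
    \<comment> \<open>u is the (classical) solution on [0,Tmax)\<close>
    and Tmax_pos: "Tmax > 0"
    and u_per: "\<And>i t. i < N \<Longrightarrow> 0 \<le> t \<Longrightarrow> ereal t < Tmax \<Longrightarrow> periodic L (\<lambda>x. u i x t)"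
    and u_init: "\<And>i x. i < N \<Longrightarrow> u i x 0 = u0 i x"
    and u_cont: "\<And>i. i < N \<Longrightarrow>
        continuous_on (UNIV \<times> {t. 0 \<le> t \<and> ereal t < Tmax}) (\<lambda>(x, t). u i x t)"
    and u_C2x: "\<And>i t. i < N \<Longrightarrow> 0 < t \<Longrightarrow> ereal t < Tmax \<Longrightarrow> C2 (\<lambda>x. u i x t)"
    and u_x_cont: "\<And>i. i < N \<Longrightarrow>
        continuous_on (UNIV \<times> {t. 0 < t \<and> ereal t < Tmax}) (\<lambda>(x, t). deriv (\<lambda>y. u i y t) x)"
    and u_xx_cont: "\<And>i. i < N \<Longrightarrow>
        continuous_on (UNIV \<times> {t. 0 < t \<and> ereal t < Tmax})
          (\<lambda>(x, t). deriv (deriv (\<lambda>y. u i y t)) x)"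
    and u_pde: "\<And>i x t. i < N \<Longrightarrow> 0 < t \<Longrightarrow> ereal t < Tmax \<Longrightarrow>
        ((\<lambda>s. u i x s) has_real_derivative
           (D i * deriv (deriv (\<lambda>y. u i y t)) x
            - deriv (\<lambda>y. u i y t *
                deriv (\<lambda>z. \<Sum>j<N. h i j * pconv L K (\<lambda>w. u j w t) z) y) x)) (at t)"
  shows "\<forall>i<N. \<forall>x t. 0 \<le> t \<and> ereal t < Tstar L N u Tmax \<and> ereal t < Tmax \<longrightarrow> u i x t > 0"
proof (intro allI impI)
  fix i xs ts assume i: "i < N" and tsa: "0 \<le> ts \<and> ereal ts < Tstar L N u Tmax \<and> ereal ts < Tmax"
  then have ts0: "0 \<le> ts" and tsT: "ereal ts < Tmax" by auto
  have ltT: "ereal t < Tmax" if "t \<le> ts" for t using tsT that by (meson ereal_less_eq(3) le_less_trans)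
  show "u i xs ts > 0"
  proof (cases "ts = 0")
    case True then show ?thesis using u_init[OF i] u0_pos[OF i] by simp
  next
    case False
    then have tspos: "ts > 0" using ts0 by simp
    obtain M where M: "\<And>x. \<bar>deriv K x\<bar> \<le> M" using K'_bdd by blast
    define S0 where "S0 = {0..L} \<times> {0..ts}"
    have cS0: "compact S0" unfolding S0_def by (simp add: compact_Times)
    have ucS0: "continuous_on S0 (\<lambda>(x, t). u i x t)"
      by (rule continuous_on_subset[OF u_cont[OF i]]) (auto simp: S0_def intro: ltT)
    have u0c: "continuous_on {0..L} (\<lambda>x. u i x 0)"
    proof -
      have "continuous_on UNIV (u0 i)" using u0_C2[OF i] deriv_cont unfolding C2_def by blast
      then show ?thesis using u_init[OF i] continuous_on_subset[OF _ subset_UNIV] by simp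
    qed
    obtain xm where xm: "xm \<in> {0..L}" "\<And>y. y \<in> {0..L} \<Longrightarrow> u i xm 0 \<le> u i y 0"
      using continuous_attains_inf[OF compact_Icc _ u0c] L_pos by force
    define m0 where "m0 = u i xm 0"
    have m0: "m0 > 0" using u0_pos[OF i] u_init[OF i] by (simp add: m0_def)
    obtain d where d: "d > 0" "\<And>p p'. p \<in> S0 \<Longrightarrow> p' \<in> S0 \<Longrightarrow> dist p' p < d \<Longrightarrow>
        dist ((\<lambda>(x, t). u i x t) p') ((\<lambda>(x, t). u i x t) p) < m0 / 2"
    proof -
      have "m0 / 2 > 0" using m0 by simp
      then show ?thesis using that compact_uniformly_continuous[OF ucS0 cS0, unfolded uniformly_continuous_on_def, rule_format, of "m0/2"]
        by blast
    qed
    define \<delta> where "\<delta> = min (d/2) ts"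
    have \<delta>: "\<delta> > 0" "\<delta> \<le> ts" using d tspos by (auto simp: \<delta>_def)
    have uat\<delta>: "u i x \<delta> > m0 / 2" if "x \<in> {0..L}" for x
    proof -
      have "dist (x, \<delta>) (x, 0) < d" using \<delta> d by (simp add: dist_Pair_Pair \<delta>_def)
      then have "dist (u i x \<delta>) (u i x 0) < m0 / 2"
        using d(2)[of "(x, 0)" "(x, \<delta>)"] that \<delta> by (auto simp: S0_def)
      moreover have "m0 \<le> u i x 0" using xm that by (simp add: m0_def)
      ultimately show ?thesis unfolding dist_real_def by linarith
    qed
    have "\<forall>j<N. \<exists>B. \<forall>p\<in>{0..L} \<times> {\<delta>..ts}. \<bar>deriv (\<lambda>y. u j y (snd p)) (fst p)\<bar> \<le> B"
    proof (intro allI impI)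
      fix j assume j: "j < N"
      have "continuous_on ({0..L} \<times> {\<delta>..ts}) (\<lambda>(x, t). deriv (\<lambda>y. u j y t) x)"
        by (rule continuous_on_subset[OF u_x_cont[OF j]]) (use \<delta> in \<open>auto intro: ltT\<close>)
      then have "compact ((\<lambda>(x, t). deriv (\<lambda>y. u j y t) x) ` ({0..L} \<times> {\<delta>..ts}))"
        by (intro compact_continuous_image) (auto simp: compact_Times)
      then have "bounded ((\<lambda>(x, t). deriv (\<lambda>y. u j y t) x) ` ({0..L} \<times> {\<delta>..ts}))"
        by (rule compact_imp_bounded)
      then obtain B where "\<forall>z\<in>(\<lambda>(x, t). deriv (\<lambda>y. u j y t) x) ` ({0..L} \<times> {\<delta>..ts}). norm z \<le> B"
        unfolding bounded_iff by blast
      then show "\<exists>B. \<forall>p\<in>{0..L} \<times> {\<delta>..ts}. \<bar>deriv (\<lambda>y. u j y (snd p)) (fst p)\<bar> \<le> B"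
        by (auto simp: split_beta)
    qed
    then have "\<forall>j. \<exists>B. j < N \<longrightarrow> (\<forall>p\<in>{0..L} \<times> {\<delta>..ts}. \<bar>deriv (\<lambda>y. u j y (snd p)) (fst p)\<bar> \<le> B)"
      by blast
    then obtain Bf where Bf0: "\<forall>j. j < N \<longrightarrow> (\<forall>p\<in>{0..L} \<times> {\<delta>..ts}. \<bar>deriv (\<lambda>y. u j y (snd p)) (fst p)\<bar> \<le> Bf j)"
      by (rule choice[THEN exE])
    have Bf: "\<bar>deriv (\<lambda>y. u j y t) x\<bar> \<le> Bf j" if "j < N" "x \<in> {0..L}" "t \<in> {\<delta>..ts}" for j x t
      using Bf0 that by (metis SigmaI fst_conv snd_conv)
    define C where "C = (\<Sum>j<N. \<bar>h i j\<bar> * (M * Bf j * L))"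
    define W where "W t = deriv (\<lambda>z. \<Sum>j<N. h i j * pconv L K (\<lambda>w. u j w t) z)" for t
    define W' where "W' t y = (\<Sum>j<N. h i j * integral {0..L} (\<lambda>s. deriv K (y - s) * deriv (\<lambda>w. u j w t) s))" for t y
    have Wd: "(W t has_real_derivative W' t y) (at y)" and W'b: "W' t y \<le> C"
      if t: "t \<in> {\<delta>..ts}" for t y
    proof -
      have tp: "0 < t" "ereal t < Tmax" using t \<delta> ltT by auto
      have C2j: "C2 (\<lambda>w. u j w t)" if "j < N" for j using u_C2x[OF that tp] .
      note WL = W_lemma[OF K_diff K_per, of N "\<lambda>j w. u j w t" "h i"]
      have WL1: "W t = (\<lambda>y. \<Sum>j<N. h i j * integral {0..L} (\<lambda>s. K (y - s) * deriv (\<lambda>w. u j w t) s))"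
        unfolding W_def
        by (rule WL(1)) (use C2j u_per tp in \<open>auto simp: C2_def\<close>)
      show "(W t has_real_derivative W' t y) (at y)"
        unfolding WL1 W'_def
        by (rule WL(2)) (use C2j u_per tp in \<open>auto simp: C2_def\<close>)
      have "W' t y \<le> \<bar>W' t y\<bar>" by simp
      also have "\<dots> \<le> (\<Sum>j<N. \<bar>h i j * integral {0..L} (\<lambda>s. deriv K (y - s) * deriv (\<lambda>w. u j w t) s)\<bar>)"
        unfolding W'_def by (rule sum_abs)
      also have "\<dots> \<le> C" unfolding C_def abs_mult
      proof (rule sum_mono, rule mult_left_mono)
        fix j assume "j \<in> {..<N}"
        then have j: "j < N" by simp
        have K'c: "continuous_on UNIV (deriv K)" using deriv_cont K_diff(2) .
        have "continuous_on UNIV (deriv (\<lambda>w. u j w t))"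
          using C2j[OF j] deriv_cont unfolding C2_def by blast
        then show "\<bar>integral {0..L} (\<lambda>s. deriv K (y - s) * deriv (\<lambda>w. u j w t) s)\<bar> \<le> M * Bf j * L"
          by (intro int_bound) (use L_pos M Bf[OF j _ t] in \<open>auto intro!: continuous_intros
               continuous_on_compose2[OF K'c] intro: continuous_on_subset\<close>)
      qed simp
      finally show "W' t y \<le> C" .
    qed
    define lam where "lam = C + 1"
    define q where "q t = m0 / 4 * exp (- lam * (t - \<delta>))" for t
    have qpos: "q t > 0" for t using m0 by (simp add: q_def)
    define Z where "Z = {t \<in> {\<delta>..ts}. \<exists>x\<in>{0..L}. u i x t - q t \<le> 0}"
    have Zempty: "Z = {}"
    proof (rule ccontr)
      assume Zne: "Z \<noteq> {}"
      define Sb where "Sb = ({0..L} \<times> {\<delta>..ts}) \<inter> (\<lambda>(x, t). u i x t - q t) -` {..0}"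
      have "continuous_on ({0..L} \<times> {\<delta>..ts}) (\<lambda>(x, t). u i x t - q t)"
      proof -
        have "continuous_on ({0..L} \<times> {\<delta>..ts}) (\<lambda>(x, t). u i x t)"
          by (rule continuous_on_subset[OF u_cont[OF i]]) (use \<delta> in \<open>auto intro: ltT\<close>)
        moreover have "continuous_on ({0..L} \<times> {\<delta>..ts}) (\<lambda>p. q (snd p))"
          unfolding q_def by (intro continuous_intros)
        ultimately show ?thesis by (simp add: split_beta continuous_on_diff)
      qed
      then have "closed ((\<lambda>(x, t). u i x t - q t) -` {..0} \<inter> ({0..L} \<times> {\<delta>..ts}))"
        by (intro closed_vimage_Int) (auto simp: closed_Times)
      then have "closed Sb" unfolding Sb_def by (simp add: Int_commute)
      moreover have "bounded Sb" unfolding Sb_def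
        by (rule bounded_subset[of "{0..L} \<times> {\<delta>..ts}"]) (auto intro: compact_imp_bounded simp: compact_Times)
      ultimately have "compact Sb" using compact_eq_bounded_closed by blast
      then have "compact (snd ` Sb)" by (intro compact_continuous_image continuous_intros)
      moreover have "snd ` Sb = Z" unfolding Sb_def Z_def by force
      ultimately have cZ: "closed Z" using compact_imp_closed by blast
      define t0 where "t0 = Inf Z"
      have t0Z: "t0 \<in> Z" unfolding t0_def
        by (rule closed_contains_Inf[OF Zne _ cZ]) (auto simp: Z_def bdd_below_def)
      then have t0r: "t0 \<in> {\<delta>..ts}" and "\<exists>x\<in>{0..L}. u i x t0 - q t0 \<le> 0" by (auto simp: Z_def)
      then obtain x1 where x1: "x1 \<in> {0..L}" "u i x1 t0 - q t0 \<le> 0" by blast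
      have "t0 \<noteq> \<delta>"
      proof
        assume "t0 = \<delta>"
        then have "u i x1 \<delta> \<le> m0 / 4" using x1 by (simp add: q_def)
        then show False using uat\<delta>[OF x1(1)] m0 by simp
      qed
      then have t0gt: "\<delta> < t0" using t0r by simp
      have tp0: "0 < t0" "ereal t0 < Tmax" using t0r \<delta> ltT by auto
      have C2t0: "C2 (\<lambda>y. u i y t0)" using u_C2x[OF i tp0] .
      have fd: "((\<lambda>y. u i y t0) has_real_derivative deriv (\<lambda>y. u i y t0) x) (at x)" for x
        using C2t0 unfolding C2_def using DERIV_deriv_iff_real_differentiable by blast
      have f'd: "(deriv (\<lambda>y. u i y t0) has_real_derivative deriv (deriv (\<lambda>y. u i y t0)) x) (at x)" for x
        using C2t0 unfolding C2_def using DERIV_deriv_iff_real_differentiable by blast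
      have x0c: "continuous_on {0..L} (\<lambda>y. u i y t0)"
      proof -
        have "continuous_on UNIV (\<lambda>y. u i y t0)" using C2t0 deriv_cont unfolding C2_def by blast
        then show ?thesis using continuous_on_subset[OF _ subset_UNIV] by blast
      qed
      obtain x0 where x0: "x0 \<in> {0..L}" "\<And>y. y \<in> {0..L} \<Longrightarrow> u i x0 t0 \<le> u i y t0"
        using continuous_attains_inf[OF compact_Icc _ x0c] L_pos by (metis atLeastAtMost_iff empty_iff less_eq_real_def)
      have gmin: "u i x0 t0 \<le> u i y t0" for y
      proof -
        obtain y' where "y' \<in> {0..L}" "u i y t0 = u i y' t0"
          using periodic_reduce[OF L_pos u_per[OF i _ tp0(2)]] tp0 by force
        then show ?thesis using x0 by simp
      qed
      define g where "g t = u i x0 t - q t" for t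
      have "(q has_real_derivative - lam * q t0) (at t0)"
        unfolding q_def by (auto intro!: derivative_eq_intros)
      then have gd: "(g has_real_derivative
           (D i * deriv (deriv (\<lambda>y. u i y t0)) x0
            - deriv (\<lambda>y. u i y t0 * W t0 y) x0) - (- lam * q t0)) (at t0)"
        unfolding g_def W_def using u_pde[OF i tp0] by (intro DERIV_diff) auto
      have gpos: "g t > 0" if "\<delta> < t" "t < t0" for t
      proof (rule ccontr)
        assume "\<not> g t > 0"
        then have "u i x0 t - q t \<le> 0" by (simp add: g_def)
        moreover have "t \<in> {\<delta>..ts}" using that t0r by auto
        ultimately have "t \<in> Z" using x0(1) unfolding Z_def by blast
        then have "t0 \<le> t" unfolding t0_def by (rule cInf_lower) (auto simp: Z_def bdd_below_def)
        then show False using that by simp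
      qed
      have g0: "g t0 \<le> 0" using gmin[of x1] x1 by (simp add: g_def)
      note dl = deriv_left_nonpos[OF gd t0gt gpos g0]
      have ueq: "u i x0 t0 = q t0" using dl(2) by (simp add: g_def)
      note ms = min_second_deriv[OF fd f'd gmin]
      have "((\<lambda>y. u i y t0 * W t0 y) has_real_derivative
              deriv (\<lambda>y. u i y t0) x0 * W t0 x0 + W' t0 x0 * u i x0 t0) (at x0)"
        by (rule DERIV_mult[OF fd Wd[OF t0r]])
      then have R: "deriv (\<lambda>y. u i y t0 * W t0 y) x0 = q t0 * W' t0 x0"
        using DERIV_imp_deriv ms(1) ueq by (simp add: mult.commute)
      have "q t0 * W' t0 x0 \<le> q t0 * C" using W'b[OF t0r] qpos by (simp add: mult_left_mono less_imp_le)
      moreover have "D i * deriv (deriv (\<lambda>y. u i y t0)) x0 \<ge> 0"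
        using D_pos[OF i] ms(2) by simp
      ultimately have "(D i * deriv (deriv (\<lambda>y. u i y t0)) x0
            - deriv (\<lambda>y. u i y t0 * W t0 y) x0) - (- lam * q t0) \<ge> q t0"
        unfolding R lam_def by (simp add: algebra_simps)
      then show False using dl(1) qpos[of t0] by simp
    qed
    obtain y where y: "y \<in> {0..L}" "u i xs ts = u i y ts"
      using periodic_reduce[OF L_pos u_per[OF i ts0 tsT]] by force
    have "ts \<in> {\<delta>..ts}" using \<delta> by simp
    then have "u i y ts - q ts > 0" using Zempty y(1) unfolding Z_def by force
    then show ?thesis using y(2) qpos[of ts] by simp
  qed
qed

end
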